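(* Let $\Gamma$ be a finitely generated group. If there exists a finite generating set $X$ of $\Gamma$ and a generic subset $S\subset \mathbb F_X$ such that $\Gamma$ has solvable Equality Problem on $S\times S$, then $\Gamma$ has solvable Word Problem.
   Context: For a finite generating set $X$ of $\Gamma$, $\mathbb F_X$ is the free group on $X$ (elements are freely reduced words) and $\pi:\mathbb F_X\to\Gamma$ the canonical epimorphism. $|\omega|$ is the length of $\omega\in\mathbb F_X$, and $B_n=\{\omega\in\mathbb F_X:|\omega|\le n\}$. A set $S\subset\mathbb F_X$ is negligible if $\lim_{n\to\infty}|S\cap B_n|/|B_n|=0$, and generic if its complement is negligible. $\Gamma$ has solvable Word Problem on $S\subset\mathbb F_X$ if there is a partial algorithm that halts at least on every $\omega\in S$ and, whenever it halts on input $\omega$, correctly decides whether $\pi(\omega)$ is trivial; $\Gamma$ has solvable Word Problem if it has solvable Word Problem on $\mathbb F_X$. $\Gamma$ has solvable Equality Problem on $T\subset\mathbb F_X\times\mathbb F_X$ if there is a partial algorithm that halts at least on every $(\omega_1,\omega_2)\in T$ and, whenever it halts, correctly decides whether $\pi(\omega_1)=\pi(\omega_2)$. *)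

theory Defs
  imports "HOL-Algebra.Algebra" "HOL-Library.Nat_Bijection"
begin

datatype recf = RZero | RSucc | RProj nat | RComp recf "recf list" | RPrim recf recf | RMu recf

inductive recf_eval :: "recf \<Rightarrow> nat list \<Rightarrow> nat \<Rightarrow> bool" where
  zero: "recf_eval RZero xs 0"
| succ: "xs \<noteq> [] \<Longrightarrow> recf_eval RSucc xs (Suc (hd xs))"
| proj: "i < length xs \<Longrightarrow> recf_eval (RProj i) xs (xs ! i)"
| comp: "list_all2 (\<lambda>h y. recf_eval h xs y) hs ys \<Longrightarrow> recf_eval f ys z
          \<Longrightarrow> recf_eval (RComp f hs) xs z"
| prim0: "recf_eval f xs y \<Longrightarrow> recf_eval (RPrim f h) (0 # xs) y"
| primS: "recf_eval (RPrim f h) (k # xs) z \<Longrightarrow> recf_eval h (z # k # xs) y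
          \<Longrightarrow> recf_eval (RPrim f h) (Suc k # xs) y"
| mu: "recf_eval f (k # xs) 0 \<Longrightarrow> (\<forall>m<k. \<exists>y. recf_eval f (m # xs) y \<and> y \<noteq> 0)
          \<Longrightarrow> recf_eval (RMu f) xs k"

text \<open>A letter (b, i) stands for x_i if b = True and for x_i^(-1) if b = False.\<close>
type_synonym fword = "(bool \<times> nat) list"

definition freely_reduced :: "fword \<Rightarrow> bool" where
  "freely_reduced w \<longleftrightarrow>
     (\<forall>i. Suc i < length w \<longrightarrow>
        \<not> (snd (w ! i) = snd (w ! Suc i) \<and> fst (w ! i) \<noteq> fst (w ! Suc i)))"

definition free_words :: "nat \<Rightarrow> fword set" where
  "free_words n = {w. set (map snd w) \<subseteq> {..<n} \<and> freely_reduced w}"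

definition ball_words :: "nat \<Rightarrow> nat \<Rightarrow> fword set" where
  "ball_words n k = {w \<in> free_words n. length w \<le> k}"

definition negligible :: "nat \<Rightarrow> fword set \<Rightarrow> bool" where
  "negligible n S \<longleftrightarrow>
     (\<lambda>k. real (card (S \<inter> ball_words n k)) / real (card (ball_words n k))) \<longlonglongrightarrow> 0"

definition generic :: "nat \<Rightarrow> fword set \<Rightarrow> bool" where
  "generic n S \<longleftrightarrow> S \<subseteq> free_words n \<and> negligible n (free_words n - S)"

definition word_eval :: "('g, 'b) monoid_scheme \<Rightarrow> (nat \<Rightarrow> 'g) \<Rightarrow> fword \<Rightarrow> 'g" where
  "word_eval G g w =
     foldr (\<lambda>(b, i) acc. (if b then g i else inv\<^bsub>G\<^esub> (g i)) \<otimes>\<^bsub>G\<^esub> acc) w \<one>\<^bsub>G\<^esub>"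

definition fin_gen_set :: "('g, 'b) monoid_scheme \<Rightarrow> nat \<Rightarrow> (nat \<Rightarrow> 'g) \<Rightarrow> bool" where
  "fin_gen_set G n g \<longleftrightarrow> inj_on g {..<n} \<and> g ` {..<n} \<subseteq> carrier G
     \<and> generate G (g ` {..<n}) = carrier G"

definition word_code :: "fword \<Rightarrow> nat" where
  "word_code w = list_encode (map (\<lambda>(b, i). prod_encode (if b then 1 else 0, i)) w)"

definition WP_solvable_on :: "('g, 'b) monoid_scheme \<Rightarrow> nat \<Rightarrow> (nat \<Rightarrow> 'g) \<Rightarrow> fword set \<Rightarrow> bool" where
  "WP_solvable_on G n g S \<longleftrightarrow>
     (\<exists>f. (\<forall>w\<in>S. \<exists>y. recf_eval f [word_code w] y)
        \<and> (\<forall>w\<in>free_words n. \<forall>y. recf_eval f [word_code w] y \<longrightarrow>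
              (y = 0 \<longleftrightarrow> word_eval G g w = \<one>\<^bsub>G\<^esub>)))"

definition EP_solvable_on ::
  "('g, 'b) monoid_scheme \<Rightarrow> nat \<Rightarrow> (nat \<Rightarrow> 'g) \<Rightarrow> (fword \<times> fword) set \<Rightarrow> bool" where
  "EP_solvable_on G n g T \<longleftrightarrow>
     (\<exists>f. (\<forall>(w1, w2)\<in>T. \<exists>y. recf_eval f [word_code w1, word_code w2] y)
        \<and> (\<forall>w1\<in>free_words n. \<forall>w2\<in>free_words n. \<forall>y.
              recf_eval f [word_code w1, word_code w2] y \<longrightarrow>
              (y = 0 \<longleftrightarrow> word_eval G g w1 = word_eval G g w2)))"

end

theory Submission
  imports Defs
begin


lemma la2_uniq:
  "list_all2 (\<lambda>h y. P h y \<and> (\<forall>y'. P h y' \<longrightarrow> y = y')) hs ys \<Longrightarrow> list_all2 P hs ys' \<Longrightarrow> ys = ys'"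
proof (induction hs arbitrary: ys ys')
  case Nil then show ?case by simp
next
  case (Cons h hs)
  then show ?case by (auto simp: list_all2_Cons1)
qed

lemma recf_det: "recf_eval f xs y \<Longrightarrow> recf_eval f xs y' \<Longrightarrow> y = y'"
proof (induction arbitrary: y' rule: recf_eval.induct)
  case (zero xs) then show ?case by (cases rule: recf_eval.cases) auto
next
  case (succ xs) from succ.prems show ?case by (cases rule: recf_eval.cases) auto
next
  case (proj i xs) from proj.prems show ?case by (cases rule: recf_eval.cases) auto
next
  case (comp xs hs ys f z)
  from comp.prems obtain ys' where a: "list_all2 (\<lambda>h. recf_eval h xs) hs ys'" and b: "recf_eval f ys' y'"
    by (cases rule: recf_eval.cases) auto
  have "ys = ys'" using la2_uniq[OF comp.IH(1) a] .
  then show ?case using comp.IH(2) b by simp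
next
  case (prim0 f xs y h) from prim0.prems show ?case using prim0.IH by (cases rule: recf_eval.cases) auto
next
  case (primS f h k xs z y)
  from primS.prems obtain z' where "recf_eval (RPrim f h) (k # xs) z'" "recf_eval h (z' # k # xs) y'"
    by (cases rule: recf_eval.cases) auto
  then show ?case using primS.IH by metis
next
  case (mu f k xs)
  from mu.prems have a: "recf_eval f (y' # xs) 0" and b: "\<forall>m<y'. \<exists>y. recf_eval f (m # xs) y \<and> y \<noteq> 0"
    by (cases rule: recf_eval.cases; auto)+
  show ?case
  proof (rule linorder_cases[of k y'])
    assume "k < y'"
    then obtain y where "recf_eval f (k # xs) y" "y \<noteq> 0" using b by blast
    then show ?thesis using mu.IH by auto
  next
    assume "y' < k"
    then obtain y where "recf_eval f (y' # xs) y" "y \<noteq> 0" "\<forall>x. recf_eval f (y' # xs) x \<longrightarrow> y = x"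
      using mu.IH by blast
    then show ?thesis using a by auto
  qed
qed

definition cb :: "recf \<Rightarrow> nat \<Rightarrow> (nat list \<Rightarrow> nat) \<Rightarrow> bool" where
  "cb h a F \<longleftrightarrow> (\<forall>xs. length xs = a \<longrightarrow> recf_eval h xs (F xs))"

lemma cbD: "cb h a F \<Longrightarrow> length xs = a \<Longrightarrow> recf_eval h xs (F xs)"
  by (simp add: cb_def)

lemma cb_val: "cb h a F \<Longrightarrow> length xs = a \<Longrightarrow> recf_eval h xs y \<Longrightarrow> y = F xs"
  using recf_det cbD by metis

lemma cb_cong: "cb h a F \<Longrightarrow> (\<And>xs. length xs = a \<Longrightarrow> G xs = F xs) \<Longrightarrow> cb h a G"
  by (simp add: cb_def)

lemma cb_cong2: "cb h a F \<Longrightarrow> a = b \<Longrightarrow> (\<And>xs. length xs = b \<Longrightarrow> G xs = F xs) \<Longrightarrow> cb h b G"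
  by (simp add: cb_def)

lemma cb_zero: "cb RZero a (\<lambda>_. 0)"
  by (simp add: cb_def recf_eval.zero)

lemma cb_proj: "i < a \<Longrightarrow> cb (RProj i) a (\<lambda>xs. xs ! i)"
  by (simp add: cb_def recf_eval.proj)

lemma cb_succ_gen: "0 < a \<Longrightarrow> cb RSucc a (\<lambda>xs. Suc (xs ! 0))"
  unfolding cb_def
proof (intro allI impI)
  fix xs :: "nat list" assume "0 < a" "length xs = a"
  then have "xs \<noteq> []" by auto
  then show "recf_eval RSucc xs (Suc (xs ! 0))" using recf_eval.succ[of xs] by (simp add: hd_conv_nth)
qed

lemma cb_succ: "cb RSucc 1 (\<lambda>xs. Suc (xs ! 0))" by (rule cb_succ_gen) simp

named_theorems cbI
declare cb_zero[cbI] cb_proj[cbI] cb_succ[cbI]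

lemma la2_nil: "list_all2 P [] []" by simp
lemma la2_cons: "P x y \<Longrightarrow> list_all2 P xs ys \<Longrightarrow> list_all2 P (x # xs) (y # ys)" by simp
declare la2_nil[cbI] la2_cons[cbI]

lemma cb_comp:
  assumes "cb f m F0" "list_all2 (\<lambda>g G. cb g a G) gs Gs" "length gs = m"
    "\<And>xs. length xs = a \<Longrightarrow> F xs = F0 (map (\<lambda>G. G xs) Gs)"
  shows "cb (RComp f gs) a F"
  unfolding cb_def
proof (intro allI impI)
  fix xs :: "nat list" assume l: "length xs = a"
  have "list_all2 (\<lambda>h y. recf_eval h xs y) gs (map (\<lambda>G. G xs) Gs)"
    using assms(2) l by (auto simp: list_all2_conv_all_nth cb_def)
  moreover have "length (map (\<lambda>G. G xs) Gs) = length gs" using assms(2) by (simp add: list_all2_lengthD)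
  ultimately show "recf_eval (RComp f gs) xs (F xs)"
    using assms(1,3,4) l by (auto simp: cb_def intro!: recf_eval.comp)
qed

declare cb_comp[cbI]

fun prec :: "(nat list \<Rightarrow> nat) \<Rightarrow> (nat list \<Rightarrow> nat) \<Rightarrow> nat \<Rightarrow> nat list \<Rightarrow> nat" where
  "prec F H 0 ys = F ys"
| "prec F H (Suc k) ys = H (prec F H k ys # k # ys)"

lemma cb_prim:
  assumes "cb f a F" "cb h (Suc (Suc a)) H"
  shows "cb (RPrim f h) (Suc a) (\<lambda>xs. prec F H (hd xs) (tl xs))"
  unfolding cb_def
proof (intro allI impI)
  fix xs :: "nat list" assume "length xs = Suc a"
  then obtain k ys where xs: "xs = k # ys" and l: "length ys = a" by (cases xs) auto
  have "recf_eval (RPrim f h) (k # ys) (prec F H k ys)"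
  proof (induction k)
    case 0 then show ?case using assms(1) l by (auto simp: cb_def intro: recf_eval.prim0)
  next
    case (Suc k) then show ?case using assms(2) l by (auto simp: cb_def intro: recf_eval.primS)
  qed
  then show "recf_eval (RPrim f h) xs (prec F H (hd xs) (tl xs))" by (simp add: xs)
qed

lemma len1: "length xs = Suc 0 \<longleftrightarrow> (\<exists>x. xs = [x])" by (cases xs) auto
lemma len2: "length xs = Suc (Suc 0) \<longleftrightarrow> (\<exists>x y. xs = [x, y])" by (auto simp: length_Suc_conv)
lemma len3: "length xs = Suc (Suc (Suc 0)) \<longleftrightarrow> (\<exists>x y z. xs = [x, y, z])" by (auto simp: length_Suc_conv)

definition "ONE = RComp RSucc [RZero]"
lemma cb_one: "cb ONE a (\<lambda>_. 1)"
  unfolding ONE_def by (rule cbI | simp)+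

fun CONSTN :: "nat \<Rightarrow> recf" where
  "CONSTN 0 = RZero" | "CONSTN (Suc k) = RComp RSucc [CONSTN k]"
lemma cb_const: "cb (CONSTN k) a (\<lambda>_. k)"
  by (induction k) (simp, (rule cbI | simp)+)

definition "ADD = RPrim (RProj 0) (RComp RSucc [RProj 0])"
lemma cb_add: "cb ADD 2 (\<lambda>xs. xs ! 0 + xs ! 1)"
proof -
  have 1: "cb ADD 2 (\<lambda>xs. prec (\<lambda>xs. xs ! 0) (\<lambda>xs. Suc (xs ! 0)) (hd xs) (tl xs))"
    unfolding ADD_def numeral_2_eq_2
    by (rule cb_prim cbI | simp)+
  have 2: "prec (\<lambda>xs. xs ! 0) (\<lambda>xs. Suc (xs ! 0)) k [x] = k + x" for k x
    by (induction k) auto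
  show ?thesis by (rule cb_cong[OF 1]) (auto simp: numeral_2_eq_2 len2 2)
qed


declare cb_add[cbI] cb_one[cbI] cb_const[cbI]

definition "PRED = RPrim RZero (RProj 1)"
lemma cb_pred[cbI]: "cb PRED 1 (\<lambda>xs. xs ! 0 - 1)"
proof -
  have 1: "cb PRED (Suc 0) (\<lambda>xs. prec (\<lambda>_. 0) (\<lambda>xs. xs ! 1) (hd xs) (tl xs))"
    unfolding PRED_def by (rule cb_prim cbI | simp)+
  have 2: "prec (\<lambda>_. 0) (\<lambda>xs. xs ! 1) k [] = k - 1" for k by (cases k) auto
  show ?thesis by (rule cb_cong2[OF 1]) (auto simp: len1 2[simplified])
qed

definition "SUBR = RPrim (RProj 0) (RComp PRED [RProj 0])"
lemma cb_subr: "cb SUBR 2 (\<lambda>xs. xs ! 1 - xs ! 0)"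
proof -
  have 1: "cb SUBR (Suc (Suc 0)) (\<lambda>xs. prec (\<lambda>xs. xs ! 0) (\<lambda>xs. xs ! 0 - 1) (hd xs) (tl xs))"
    unfolding SUBR_def by (rule cb_prim cbI | simp)+
  have 2: "prec (\<lambda>xs. xs ! 0) (\<lambda>xs. xs ! 0 - 1) k [x] = x - k" for k x
    by (induction k) auto
  show ?thesis by (rule cb_cong2[OF 1]) (auto simp: numeral_2_eq_2 len2 2[simplified])
qed

definition "SUB = RComp SUBR [RProj 1, RProj 0]"
lemma cb_sub[cbI]: "cb SUB 2 (\<lambda>xs. xs ! 0 - xs ! 1)"
  unfolding SUB_def by (rule cb_subr cbI | simp)+

definition "MUL = RPrim RZero (RComp ADD [RProj 0, RProj 2])"
lemma cb_mul[cbI]: "cb MUL 2 (\<lambda>xs. xs ! 0 * xs ! 1)"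
proof -
  have 1: "cb MUL (Suc (Suc 0)) (\<lambda>xs. prec (\<lambda>_. 0) (\<lambda>xs. xs ! 0 + xs ! 2) (hd xs) (tl xs))"
    unfolding MUL_def by (rule cb_prim cbI | simp)+
  have 2: "prec (\<lambda>_. 0) (\<lambda>xs. xs ! 0 + xs ! 2) k [x] = k * x" for k x
    by (induction k) auto
  show ?thesis by (rule cb_cong2[OF 1]) (auto simp: numeral_2_eq_2 len2 2[unfolded numeral_2_eq_2])
qed

definition "SG = RPrim RZero ONE"
lemma cb_sg[cbI]: "cb SG 1 (\<lambda>xs. if xs ! 0 = 0 then 0 else 1)"
proof -
  have 1: "cb SG (Suc 0) (\<lambda>xs. prec (\<lambda>_. 0) (\<lambda>_. 1) (hd xs) (tl xs))"
    unfolding SG_def by (rule cb_prim cbI | simp)+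
  have 2: "prec (\<lambda>_. 0) (\<lambda>_. 1) k [] = (if k = 0 then 0 else 1)" for k by (cases k) auto
  show ?thesis by (rule cb_cong2[OF 1]) (auto simp: len1 2[simplified])
qed

definition "NSG = RPrim ONE RZero"
lemma cb_nsg[cbI]: "cb NSG 1 (\<lambda>xs. if xs ! 0 = 0 then 1 else 0)"
proof -
  have 1: "cb NSG (Suc 0) (\<lambda>xs. prec (\<lambda>_. 1) (\<lambda>_. 0) (hd xs) (tl xs))"
    unfolding NSG_def by (rule cb_prim cbI | simp)+
  have 2: "prec (\<lambda>_. 1) (\<lambda>_. 0) k [] = (if k = 0 then 1 else 0)" for k by (cases k) auto
  show ?thesis by (rule cb_cong2[OF 1]) (auto simp: len1 2[simplified])
qed

definition "EQ = RComp NSG [RComp ADD [SUB, RComp SUB [RProj 1, RProj 0]]]"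
lemma cb_eq[cbI]: "cb EQ 2 (\<lambda>xs. if xs ! 0 = xs ! 1 then 1 else 0)"
  unfolding EQ_def by (rule cbI | simp)+

definition "LE = RComp NSG [SUB]"
lemma cb_le[cbI]: "cb LE 2 (\<lambda>xs. if xs ! 0 \<le> xs ! 1 then 1 else 0)"
  unfolding LE_def by (rule cbI | simp)+

definition "LT = RComp SG [RComp SUB [RProj 1, RProj 0]]"
lemma cb_lt[cbI]: "cb LT 2 (\<lambda>xs. if xs ! 0 < xs ! 1 then 1 else 0)"
  unfolding LT_def by (rule cbI | simp)+


definition ev :: "recf \<Rightarrow> nat list \<Rightarrow> nat" where "ev h xs = (THE z. recf_eval h xs z)"

lemma ev_eq: "cb h a F \<Longrightarrow> length xs = a \<Longrightarrow> ev h xs = F xs"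
  unfolding ev_def using cb_val cbD by blast

lemma cb_ev: "cb h a F \<Longrightarrow> cb h a (ev h)"
  by (rule cb_cong) (auto simp: ev_eq)

lemma la2_map: "(\<And>h. h \<in> set hs \<Longrightarrow> cb (\<phi> h) a (\<psi> h)) \<Longrightarrow> list_all2 (\<lambda>g G. cb g a G) (map \<phi> hs) (map \<psi> hs)"
  by (auto simp: list_all2_conv_all_nth)

lemma map_nth_tl: "length zs = Suc m \<Longrightarrow> map (\<lambda>i. zs ! i) [1..<Suc m] = tl zs"
  by (rule nth_equalityI) (auto simp del: upt_Suc simp: nth_tl)

lemma map_nth_tl': "length zs = Suc m \<Longrightarrow> map (\<lambda>i. zs ! i) [Suc 0..<Suc m] = tl zs"
  using map_nth_tl[of zs m] by (simp del: upt_Suc)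

lemma map_nth_all: "length zs = m \<Longrightarrow> map (\<lambda>i. zs ! i) [0..<m] = zs"
  by (rule nth_equalityI) auto

lemma ex_common: "(\<And>i. i < (N::nat) \<Longrightarrow> \<exists>t0::nat. \<forall>t\<ge>t0. P i t) \<Longrightarrow> \<exists>t0. \<forall>t\<ge>t0. \<forall>i<N. P i t"
proof (induction N)
  case 0 then show ?case by auto
next
  case (Suc N)
  then obtain t1 where 1: "\<forall>t\<ge>t1. \<forall>i<N. P i t" by auto
  obtain t2 where 2: "\<forall>t\<ge>t2. P N t" using Suc.prems[of N] by auto
  show ?case
  proof (rule exI[of _ "max t1 t2"], intro allI impI)
    fix t i assume "max t1 t2 \<le> t" "i < Suc N"
    then have "t1 \<le> t" "t2 \<le> t" "i < N \<or> i = N" by auto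
    then show "P i t" using 1 2 by auto
  qed
qed

definition "GUARD g x = RComp MUL [RComp SG [g], x]"

fun GUARDS :: "recf list \<Rightarrow> recf \<Rightarrow> recf" where
  "GUARDS [] x = x" | "GUARDS (g # gs) x = GUARD g (GUARDS gs x)"

lemma cb_guard: "cb g a GG \<Longrightarrow> cb x a XX \<Longrightarrow> cb (GUARD g x) a (\<lambda>xs. if GG xs = 0 then 0 else XX xs)"
  unfolding GUARD_def by (rule cbI | assumption | simp)+

lemma cb_guards: "(\<And>g. g \<in> set gs \<Longrightarrow> cb g a (ev g)) \<Longrightarrow> cb x a XX \<Longrightarrow>
   cb (GUARDS gs x) a (\<lambda>xs. if \<forall>g\<in>set gs. ev g xs \<noteq> 0 then XX xs else 0)"
proof (induction gs)
  case Nil then show ?case by simp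
next
  case (Cons g gs)
  have "cb (GUARD g (GUARDS gs x)) a (\<lambda>xs. if ev g xs = 0 then 0 else (if \<forall>g\<in>set gs. ev g xs \<noteq> 0 then XX xs else 0))"
    using Cons by (intro cb_guard) auto
  then show ?case by (simp only: GUARDS.simps) (erule cb_cong; auto)
qed

definition MSTEP :: "recf \<Rightarrow> nat \<Rightarrow> recf" where
  "MSTEP bf a = (let Q = RComp bf (map RProj [1..<a+3]) in
     RComp ADD [RProj 0, RComp MUL [RComp NSG [RProj 0],
       RComp ADD [RComp NSG [Q], RComp MUL [RComp EQ [Q, ONE], RComp RSucc [RComp RSucc [RProj 1]]]]]])"

fun bnd :: "recf \<Rightarrow> nat \<Rightarrow> recf" where
  "bnd RZero a = ONE"
| "bnd RSucc a = (if a = 0 then RZero else RComp RSucc [RComp RSucc [RProj 0]])"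
| "bnd (RProj i) a = (if i < a then RComp RSucc [RProj i] else RZero)"
| "bnd (RComp f hs) a = GUARDS (map (\<lambda>h. bnd h a) hs)
      (RComp (bnd f (length hs)) (map (\<lambda>h. RComp PRED [bnd h a]) hs @ [RProj a]))"
| "bnd (RPrim f h) a = (if a = 0 then RZero else
      RPrim (bnd f (a - 1)) (GUARD (RProj 0) (RComp (bnd h (Suc a)) (RComp PRED [RProj 0] # map RProj [1..<a+2]))))"
| "bnd (RMu f) a = RComp PRED [RComp (RPrim RZero (MSTEP (bnd f (Suc a)) a))
      (RComp RSucc [RProj a] # map RProj [0..<Suc a])]"


definition Pb :: "recf \<Rightarrow> nat \<Rightarrow> bool" where
  "Pb f a \<longleftrightarrow> cb (bnd f a) (Suc a) (ev (bnd f a))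
     \<and> (\<forall>xs t. length xs = a \<longrightarrow> ev (bnd f a) (xs @ [t]) \<noteq> 0 \<longrightarrow> recf_eval f xs (ev (bnd f a) (xs @ [t]) - 1))
     \<and> (\<forall>xs y. length xs = a \<longrightarrow> recf_eval f xs y \<longrightarrow> (\<exists>t0. \<forall>t\<ge>t0. ev (bnd f a) (xs @ [t]) = Suc y))"

lemma Pb_intro:
  assumes "cb (bnd f a) (Suc a) F"
    "\<And>xs t. length xs = a \<Longrightarrow> F (xs @ [t]) \<noteq> 0 \<Longrightarrow> recf_eval f xs (F (xs @ [t]) - 1)"
    "\<And>xs y. length xs = a \<Longrightarrow> recf_eval f xs y \<Longrightarrow> \<exists>t0. \<forall>t\<ge>t0. F (xs @ [t]) = Suc y"
  shows "Pb f a"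
proof -
  have e: "ev (bnd f a) (xs @ [t]) = F (xs @ [t])" if "length xs = a" for xs t
    using ev_eq[OF assms(1)] that by simp
  show ?thesis unfolding Pb_def using assms e cb_ev[OF assms(1)] by simp
qed

lemma Pb_zero: "Pb RZero a"
proof -
  have c: "cb (bnd RZero a) (Suc a) (\<lambda>_. 1)" by (simp only: bnd.simps) (rule cb_one)
  show ?thesis by (rule Pb_intro[OF c]) (auto intro: recf_eval.zero elim: recf_eval.cases)
qed

lemma Pb_succ: "Pb RSucc a"
proof (cases "a = 0")
  case True
  show ?thesis by (rule Pb_intro[where F="\<lambda>_. 0"]) (use True in \<open>auto simp: cb_zero elim: recf_eval.cases\<close>)
next
  case False
  have c: "cb (bnd RSucc a) (Suc a) (\<lambda>zs. Suc (Suc (zs ! 0)))"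
    using False by simp (rule cbI | simp)+
  show ?thesis
  proof (rule Pb_intro[OF c])
    fix xs :: "nat list" and t :: nat assume "length xs = a"
    then have "xs \<noteq> []" using False by auto
    then show "recf_eval RSucc xs (Suc (Suc ((xs @ [t]) ! 0)) - 1)"
      using recf_eval.succ[of xs] by (simp add: hd_conv_nth nth_append)
  next
    fix xs :: "nat list" and y :: nat assume "length xs = a" "recf_eval RSucc xs y"
    then show "\<exists>t0. \<forall>t\<ge>t0. Suc (Suc ((xs @ [t]) ! 0)) = Suc y"
      using False by (auto simp: hd_conv_nth nth_append elim: recf_eval.cases)
  qed
qed

lemma Pb_proj: "Pb (RProj i) a"
proof (cases "i < a")
  case False
  show ?thesis by (rule Pb_intro[where F="\<lambda>_. 0"]) (use False in \<open>auto simp: cb_zero elim: recf_eval.cases\<close>)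
next
  case True
  have c: "cb (bnd (RProj i) a) (Suc a) (\<lambda>zs. Suc (zs ! i))"
    using True by simp (rule cbI | simp)+
  show ?thesis
  proof (rule Pb_intro[OF c])
    fix xs :: "nat list" and t :: nat assume "length xs = a"
    then show "recf_eval (RProj i) xs (Suc ((xs @ [t]) ! i) - 1)"
      using True recf_eval.proj[of i xs] by (simp add: nth_append)
  next
    fix xs :: "nat list" and y :: nat assume "length xs = a" "recf_eval (RProj i) xs y"
    then show "\<exists>t0. \<forall>t\<ge>t0. Suc ((xs @ [t]) ! i) = Suc y"
      using True by (auto simp: nth_append elim: recf_eval.cases)
  qed
qed

lemma Pb_comp:
  assumes IHf: "\<And>a. Pb f a" and IHh: "\<And>h a. h \<in> set hs \<Longrightarrow> Pb h a"
  shows "Pb (RComp f hs) a"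
proof -
  define m where "m = length hs"
  define F where "F = (\<lambda>zs. if \<forall>g\<in>set (map (\<lambda>h. bnd h a) hs). ev g zs \<noteq> 0
     then ev (bnd f m) (map (\<lambda>h. ev (bnd h a) zs - 1) hs @ [zs ! a]) else 0)"
  have cf: "cb (bnd f m) (Suc m) (ev (bnd f m))" using IHf Pb_def by blast
  have ch: "cb (bnd h a) (Suc a) (ev (bnd h a))" if "h \<in> set hs" for h using IHh[OF that] Pb_def by blast
  have inner: "cb (RComp (bnd f m) (map (\<lambda>h. RComp PRED [bnd h a]) hs @ [RProj a])) (Suc a)
     (\<lambda>zs. ev (bnd f m) (map (\<lambda>h. ev (bnd h a) zs - 1) hs @ [zs ! a]))"
  proof (rule cb_comp[OF cf])
    show "list_all2 (\<lambda>g G. cb g (Suc a) G) (map (\<lambda>h. RComp PRED [bnd h a]) hs @ [RProj a])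
       (map (\<lambda>h zs. ev (bnd h a) zs - 1) hs @ [\<lambda>zs. zs ! a])"
    proof (rule list_all2_appendI)
      show "list_all2 (\<lambda>g G. cb g (Suc a) G) (map (\<lambda>h. RComp PRED [bnd h a]) hs) (map (\<lambda>h zs. ev (bnd h a) zs - 1) hs)"
      proof (rule la2_map)
        fix h assume h: "h \<in> set hs"
        show "cb (RComp PRED [bnd h a]) (Suc a) (\<lambda>zs. ev (bnd h a) zs - 1)"
          by (rule cb_comp[OF cb_pred] cbI ch[OF h] | simp)+
      qed
      show "list_all2 (\<lambda>g G. cb g (Suc a) G) [RProj a] [\<lambda>zs. zs ! a]" by (auto intro: cb_proj)
    qed
  qed (auto simp: m_def o_def)
  have c: "cb (bnd (RComp f hs) a) (Suc a) F"
    unfolding F_def bnd.simps m_def[symmetric] by (rule cb_guards[OF _ inner]) (auto dest: ch)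
  show ?thesis
  proof (rule Pb_intro[OF c])
    fix xs :: "nat list" and t :: nat assume l: "length xs = a" and nz: "F (xs @ [t]) \<noteq> 0"
    define ys where "ys = map (\<lambda>h. ev (bnd h a) (xs @ [t]) - 1) hs"
    have zt: "(xs @ [t]) ! a = t" using l by (simp add: nth_append)
    from nz have allnz: "\<forall>h\<in>set hs. ev (bnd h a) (xs @ [t]) \<noteq> 0" and
      Fv: "F (xs @ [t]) = ev (bnd f m) (ys @ [t])"
      unfolding F_def ys_def zt by (auto split: if_splits)
    have Eh: "recf_eval h xs (ev (bnd h a) (xs @ [t]) - 1)" if "h \<in> set hs" for h
      using IHh[OF that, of a] allnz that l unfolding Pb_def by blast
    have lys: "length ys = m" by (simp add: ys_def m_def)
    have Ef: "recf_eval f ys (ev (bnd f m) (ys @ [t]) - 1)"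
      using IHf[of m] nz lys unfolding Pb_def Fv by blast
    have la: "list_all2 (\<lambda>h. recf_eval h xs) hs ys"
      unfolding list_all2_conv_all_nth
    proof (intro conjI allI impI)
      show "length hs = length ys" using lys m_def by simp
      fix i assume "i < length hs"
      then show "recf_eval (hs ! i) xs (ys ! i)" using Eh[of "hs ! i"] by (simp add: ys_def)
    qed
    show "recf_eval (RComp f hs) xs (F (xs @ [t]) - 1)"
      unfolding Fv by (rule recf_eval.comp[OF la Ef])
  next
    fix xs :: "nat list" and y :: nat assume l: "length xs = a" and E: "recf_eval (RComp f hs) xs y"
    from E obtain ys where la: "list_all2 (\<lambda>h. recf_eval h xs) hs ys" and Ef: "recf_eval f ys y"
      by (cases rule: recf_eval.cases) auto
    have lys: "length ys = m" using la by (simp add: list_all2_lengthD m_def)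
    have ex: "\<exists>t0. \<forall>t\<ge>t0. ev (bnd (hs ! i) a) (xs @ [t]) = Suc (ys ! i)" if "i < m" for i
    proof -
      have "hs ! i \<in> set hs" using that by (simp add: m_def)
      moreover have "recf_eval (hs ! i) xs (ys ! i)" using list_all2_nthD[OF la, of i] that by (simp add: m_def)
      ultimately show ?thesis using IHh[of "hs ! i" a] l unfolding Pb_def by blast
    qed
    have "\<exists>t0. \<forall>t\<ge>t0. \<forall>i<m. ev (bnd (hs ! i) a) (xs @ [t]) = Suc (ys ! i)"
      by (rule ex_common) (rule ex)
    then obtain t1 where t1: "\<forall>t\<ge>t1. \<forall>i<m. ev (bnd (hs ! i) a) (xs @ [t]) = Suc (ys ! i)"
      by blast
    obtain t2 where t2: "\<forall>t\<ge>t2. ev (bnd f m) (ys @ [t]) = Suc y"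
      using IHf[of m] Ef lys unfolding Pb_def by blast
    show "\<exists>t0. \<forall>t\<ge>t0. F (xs @ [t]) = Suc y"
    proof (rule exI[of _ "max t1 t2"], intro allI impI)
      fix t assume "max t1 t2 \<le> t"
      then have tt: "t1 \<le> t" "t2 \<le> t" by auto
      have vi: "ev (bnd (hs ! i) a) (xs @ [t]) = Suc (ys ! i)" if "i < m" for i
        using t1 tt(1) that by blast
      have eqys: "map (\<lambda>h. ev (bnd h a) (xs @ [t]) - 1) hs = ys"
      proof (rule nth_equalityI)
        show "length (map (\<lambda>h. ev (bnd h a) (xs @ [t]) - 1) hs) = length ys" using lys by (simp add: m_def)
        fix i assume "i < length (map (\<lambda>h. ev (bnd h a) (xs @ [t]) - 1) hs)"
        then have "i < m" by (simp add: m_def)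
        then show "map (\<lambda>h. ev (bnd h a) (xs @ [t]) - 1) hs ! i = ys ! i" using vi[of i] by (simp add: m_def)
      qed
      have nzall: "\<forall>g\<in>set (map (\<lambda>h. bnd h a) hs). ev g (xs @ [t]) \<noteq> 0"
      proof
        fix g assume "g \<in> set (map (\<lambda>h. bnd h a) hs)"
        then obtain i where "i < m" "g = bnd (hs ! i) a" by (auto simp: in_set_conv_nth m_def)
        then show "ev g (xs @ [t]) \<noteq> 0" using vi by simp
      qed
      have zt: "(xs @ [t]) ! a = t" using l by (simp add: nth_append)
      have "F (xs @ [t]) = ev (bnd f m) (ys @ [t])"
        unfolding F_def eqys zt by (subst if_P[OF nzall]) (rule refl)
      then show "F (xs @ [t]) = Suc y" using t2 tt(2) by simp
    qed
  qed
qed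


lemma inv_prim0: "recf_eval (RPrim f h) (0 # xs) y \<Longrightarrow> recf_eval f xs y"
  by (cases rule: recf_eval.cases) auto
lemma inv_primS: "recf_eval (RPrim f h) (Suc k # xs) y \<Longrightarrow> \<exists>z. recf_eval (RPrim f h) (k # xs) z \<and> recf_eval h (z # k # xs) y"
  by (cases rule: recf_eval.cases) auto
lemma inv_prim_nil: "\<not> recf_eval (RPrim f h) [] y"
  by (auto elim: recf_eval.cases)
lemma inv_mu: "recf_eval (RMu f) xs k \<Longrightarrow> recf_eval f (k # xs) 0 \<and> (\<forall>m<k. \<exists>y. recf_eval f (m # xs) y \<and> y \<noteq> 0)"
  by (cases rule: recf_eval.cases) auto

lemma Pb_prim:
  assumes IHf: "\<And>a. Pb f a" and IHh: "\<And>a. Pb h a"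
  shows "Pb (RPrim f h) a"
proof (cases a)
  case 0
  have c: "cb (bnd (RPrim f h) a) (Suc a) (\<lambda>_. 0)" using 0 by (simp add: cb_zero)
  show ?thesis by (rule Pb_intro[OF c]) (use 0 inv_prim_nil in auto)
next
  case (Suc a')
  note aS = Suc
  define H where "H = (\<lambda>zs. if zs ! 0 = 0 then 0 else ev (bnd h (Suc a)) ((zs ! 0 - 1) # tl zs))"
  have chh: "cb (bnd h (Suc a)) (Suc (Suc a)) (ev (bnd h (Suc a)))" using IHh unfolding Pb_def by blast
  have cff: "cb (bnd f a') a (ev (bnd f a'))" using IHf[of a'] Suc unfolding Pb_def by simp
  have inner: "cb (RComp (bnd h (Suc a)) (RComp PRED [RProj 0] # map RProj [1..<a+2])) (Suc (Suc a))
      (\<lambda>zs. ev (bnd h (Suc a)) ((zs ! 0 - 1) # tl zs))"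
  proof (rule cb_comp[OF chh])
    show "list_all2 (\<lambda>g G. cb g (Suc (Suc a)) G) (RComp PRED [RProj 0] # map RProj [1..<a+2])
      ((\<lambda>zs. zs ! 0 - 1) # map (\<lambda>i zs. zs ! i) [1..<a+2])"
    proof (rule la2_cons)
      show "cb (RComp PRED [RProj 0]) (Suc (Suc a)) (\<lambda>zs. zs ! 0 - 1)" by (rule cbI | simp)+
      show "list_all2 (\<lambda>g G. cb g (Suc (Suc a)) G) (map RProj [1..<a+2]) (map (\<lambda>i zs. zs ! i) [1..<a+2])"
        by (rule la2_map) (auto intro: cb_proj)
    qed
  qed (auto simp del: upt_Suc simp: map_nth_tl' o_def)
  have cstep: "cb (GUARD (RProj 0) (RComp (bnd h (Suc a)) (RComp PRED [RProj 0] # map RProj [1..<a+2]))) (Suc (Suc a)) H"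
    unfolding H_def by (rule cb_guard[OF cb_proj inner]) simp
  have c: "cb (bnd (RPrim f h) a) (Suc a) (\<lambda>zs. prec (ev (bnd f a')) H (hd zs) (tl zs))"
    using cb_prim[OF cff cstep] Suc by simp
  show ?thesis
  proof (rule Pb_intro[OF c])
    fix xs :: "nat list" and t :: nat assume l: "length xs = a"
    then obtain k xs' where xs: "xs = k # xs'" and l': "length xs' = a'" using aS by (cases xs) auto
    have "prec (ev (bnd f a')) H k (xs' @ [t]) \<noteq> 0 \<longrightarrow>
        recf_eval (RPrim f h) (k # xs') (prec (ev (bnd f a')) H k (xs' @ [t]) - 1)"
    proof (induction k)
      case 0
      show ?case using IHf[of a'] l' unfolding Pb_def by (auto intro: recf_eval.prim0)
    next
      case (Suc k)
      let ?p = "prec (ev (bnd f a')) H k (xs' @ [t])"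
      show ?case
      proof
        assume nz: "prec (ev (bnd f a')) H (Suc k) (xs' @ [t]) \<noteq> 0"
        then have pnz: "?p \<noteq> 0" and v: "prec (ev (bnd f a')) H (Suc k) (xs' @ [t]) = ev (bnd h (Suc a)) (((?p - 1) # k # xs') @ [t])"
          by (auto simp: H_def split: if_splits)
        have lx: "length ((?p - 1) # k # xs') = Suc a" using l' aS by simp
        have nz2: "ev (bnd h (Suc a)) (((?p - 1) # k # xs') @ [t]) \<noteq> 0" using nz v by simp
        have "recf_eval h ((?p - 1) # k # xs') (ev (bnd h (Suc a)) (((?p - 1) # k # xs') @ [t]) - 1)"
          using IHh[of "Suc a"] nz2 lx unfolding Pb_def by blast
        then show "recf_eval (RPrim f h) (Suc k # xs') (prec (ev (bnd f a')) H (Suc k) (xs' @ [t]) - 1)"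
          using Suc.IH pnz v by (auto intro: recf_eval.primS)
      qed
    qed
    then show "prec (ev (bnd f a')) H (hd (xs @ [t])) (tl (xs @ [t])) \<noteq> 0 \<Longrightarrow>
       recf_eval (RPrim f h) xs (prec (ev (bnd f a')) H (hd (xs @ [t])) (tl (xs @ [t])) - 1)"
      by (simp add: xs)
  next
    fix xs :: "nat list" and y :: nat assume l: "length xs = a" and E: "recf_eval (RPrim f h) xs y"
    then obtain k xs' where xs: "xs = k # xs'" and l': "length xs' = a'" using aS by (cases xs) auto
    have "recf_eval (RPrim f h) (k # xs') y \<Longrightarrow> \<exists>t0. \<forall>t\<ge>t0. prec (ev (bnd f a')) H k (xs' @ [t]) = Suc y" for y
    proof (induction k arbitrary: y)
      case 0
      then have "recf_eval f xs' y" by (rule inv_prim0)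
      then show ?case using IHf[of a'] l' unfolding Pb_def by auto
    next
      case (Suc k)
      then obtain z where z1: "recf_eval (RPrim f h) (k # xs') z" and z2: "recf_eval h (z # k # xs') y"
        using inv_primS by blast
      obtain t1 where t1: "\<forall>t\<ge>t1. prec (ev (bnd f a')) H k (xs' @ [t]) = Suc z" using Suc.IH[OF z1] by blast
      have lx: "length (z # k # xs') = Suc a" using l' aS by simp
      have "\<exists>t0. \<forall>t\<ge>t0. ev (bnd h (Suc a)) ((z # k # xs') @ [t]) = Suc y"
        using IHh[of "Suc a"] z2 lx unfolding Pb_def by blast
      then obtain t2 where t2: "\<forall>t\<ge>t2. ev (bnd h (Suc a)) ((z # k # xs') @ [t]) = Suc y" by blast
      show ?case
      proof (rule exI[of _ "max t1 t2"], intro allI impI)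
        fix t assume "max t1 t2 \<le> t"
        then have "t1 \<le> t" "t2 \<le> t" by auto
        then show "prec (ev (bnd f a')) H (Suc k) (xs' @ [t]) = Suc y"
          using t1 t2 by (simp add: H_def)
      qed
    qed
    then show "\<exists>t0. \<forall>t\<ge>t0. prec (ev (bnd f a')) H (hd (xs @ [t])) (tl (xs @ [t])) = Suc y"
      using E by (simp add: xs)
  qed
qed


fun srch :: "(nat \<Rightarrow> nat) \<Rightarrow> nat \<Rightarrow> nat" where
  "srch q 0 = 0"
| "srch q (Suc j) = (if srch q j \<noteq> 0 then srch q j else if q j = 0 then 1 else if q j = 1 then j + 2 else 0)"

lemma srch_zero: "srch q j = 0 \<Longrightarrow> i < j \<Longrightarrow> 2 \<le> q i"
proof (induction j)
  case 0 then show ?case by simp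
next
  case (Suc j)
  then show ?case by (cases "srch q j = 0"; cases "i = j") (auto split: if_splits)
qed

lemma srch_found: "2 \<le> srch q j \<Longrightarrow> q (srch q j - 2) = 1 \<and> (\<forall>i < srch q j - 2. 2 \<le> q i)"
proof (induction j)
  case 0 then show ?case by simp
next
  case (Suc j)
  show ?case
  proof (cases "srch q j = 0")
    case True
    then have "\<forall>i<j. 2 \<le> q i" using srch_zero by blast
    then show ?thesis using True Suc.prems by (auto split: if_splits)
  next
    case False
    then show ?thesis using Suc by simp
  qed
qed

lemma srch_none: "(\<forall>i<j. 2 \<le> q i) \<Longrightarrow> srch q j = 0"
  by (induction j) auto

lemma srch_hit: "(\<forall>i<k. 2 \<le> q i) \<Longrightarrow> q k = 1 \<Longrightarrow> k < j \<Longrightarrow> srch q j = k + 2"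
proof (induction j)
  case 0 then show ?case by simp
next
  case (Suc j)
  show ?case
  proof (cases "k < j")
    case True then show ?thesis using Suc by simp
  next
    case False
    then have "k = j" using Suc.prems by simp
    then show ?thesis using srch_none[of j q] Suc.prems by simp
  qed
qed

lemma Pb_mu:
  assumes IHf: "\<And>a. Pb f a"
  shows "Pb (RMu f) a"
proof -
  define bf where "bf = bnd f (Suc a)"
  have cbf: "cb bf (Suc (Suc a)) (ev bf)" using IHf[of "Suc a"] unfolding Pb_def bf_def by blast
  define STEP where "STEP = (\<lambda>zs. zs ! 0 + (if zs ! 0 = 0 then 1 else 0) *
      ((if ev bf (tl zs) = 0 then 1 else 0) + (if ev bf (tl zs) = 1 then 1 else 0) * Suc (Suc (zs ! 1))))"
  have cQ: "cb (RComp bf (map RProj [1..<a+3])) (Suc (Suc (Suc a))) (\<lambda>zs. ev bf (tl zs))"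
  proof (rule cb_comp[OF cbf])
    show "list_all2 (\<lambda>g G. cb g (Suc (Suc (Suc a))) G) (map RProj [1..<a+3]) (map (\<lambda>i zs. zs ! i) [1..<a+3])"
      by (rule la2_map) (auto intro: cb_proj)
  qed (auto simp del: upt_Suc simp: map_nth_tl' o_def numeral_3_eq_3)
  have cstep: "cb (MSTEP bf a) (Suc (Suc (Suc a))) STEP"
    unfolding MSTEP_def Let_def STEP_def by (rule cQ cbI | simp)+
  have cSM: "cb (RPrim RZero (MSTEP bf a)) (Suc (Suc a)) (\<lambda>zs. prec (\<lambda>_. 0) STEP (hd zs) (tl zs))"
    by (rule cb_prim[OF cb_zero cstep])
  define F where "F = (\<lambda>zs. prec (\<lambda>_. 0) STEP (Suc (zs ! a)) zs - 1)"
  have c: "cb (bnd (RMu f) a) (Suc a) F"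
    unfolding bnd.simps bf_def[symmetric] F_def
  proof (rule cb_comp[OF cb_pred])
    show "list_all2 (\<lambda>g G. cb g (Suc a) G) [RComp (RPrim RZero (MSTEP bf a)) (RComp RSucc [RProj a] # map RProj [0..<Suc a])]
       [\<lambda>zs. prec (\<lambda>_. 0) STEP (Suc (zs ! a)) zs]"
    proof (rule la2_cons[OF _ la2_nil])
      show "cb (RComp (RPrim RZero (MSTEP bf a)) (RComp RSucc [RProj a] # map RProj [0..<Suc a])) (Suc a)
          (\<lambda>zs. prec (\<lambda>_. 0) STEP (Suc (zs ! a)) zs)"
      proof (rule cb_comp[OF cSM])
        show "list_all2 (\<lambda>g G. cb g (Suc a) G) (RComp RSucc [RProj a] # map RProj [0..<Suc a])
           ((\<lambda>zs. Suc (zs ! a)) # map (\<lambda>i zs. zs ! i) [0..<Suc a])"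
        proof (rule la2_cons)
          show "cb (RComp RSucc [RProj a]) (Suc a) (\<lambda>zs. Suc (zs ! a))" by (rule cbI | simp)+
          show "list_all2 (\<lambda>g G. cb g (Suc a) G) (map RProj [0..<Suc a]) (map (\<lambda>i zs. zs ! i) [0..<Suc a])"
            by (rule la2_map) (auto intro: cb_proj)
        qed
      qed (auto simp del: upt_Suc simp: map_nth_all o_def)
    qed
  qed auto
  have Fsrch: "prec (\<lambda>_. 0) STEP J (xs @ [t]) = srch (\<lambda>j. ev bf (j # xs @ [t])) J" for J xs t
    by (induction J) (auto simp: STEP_def)
  have F_eq: "F (xs @ [t]) = srch (\<lambda>j. ev bf ((j # xs) @ [t])) (Suc t) - 1" if "length xs = a" for xs t
    using that by (simp add: F_def nth_append Fsrch del: prec.simps)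
  show ?thesis
  proof (rule Pb_intro[OF c])
    fix xs :: "nat list" and t :: nat assume l: "length xs = a" and nz: "F (xs @ [t]) \<noteq> 0"
    define q where "q = (\<lambda>j. ev bf ((j # xs) @ [t]))"
    define r where "r = srch q (Suc t)"
    have Fr: "F (xs @ [t]) = r - 1" using F_eq[OF l] by (simp add: q_def r_def)
    then have r2: "2 \<le> r" using nz by simp
    from srch_found[of q "Suc t"] r2 have hit: "q (r - 2) = 1" and below: "\<forall>i<r - 2. 2 \<le> q i"
      unfolding r_def by auto
    have sound: "recf_eval f (j # xs) (q j - 1)" if "q j \<noteq> 0" for j
    proof -
      have lx: "length (j # xs) = Suc a" using l by simp
      have P2: "\<And>xs t. length xs = Suc a \<Longrightarrow> ev (bnd f (Suc a)) (xs @ [t]) \<noteq> 0 \<Longrightarrow> recf_eval f xs (ev (bnd f (Suc a)) (xs @ [t]) - 1)"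
        using IHf[of "Suc a"] unfolding Pb_def by blast
      show ?thesis using P2[OF lx] that unfolding q_def bf_def by simp
    qed
    have "recf_eval (RMu f) xs (r - 2)"
    proof (rule recf_eval.mu)
      show "recf_eval f ((r - 2) # xs) 0" using sound[of "r - 2"] hit by simp
      show "\<forall>m<r - 2. \<exists>y. recf_eval f (m # xs) y \<and> y \<noteq> 0"
      proof (intro allI impI)
        fix m assume "m < r - 2"
        then have "2 \<le> q m" using below by auto
        then show "\<exists>y. recf_eval f (m # xs) y \<and> y \<noteq> 0" using sound[of m] by (intro exI[of _ "q m - 1"]) auto
      qed
    qed
    moreover have "F (xs @ [t]) - 1 = r - 2" using Fr by simp
    ultimately show "recf_eval (RMu f) xs (F (xs @ [t]) - 1)" by simp
  next
    fix xs :: "nat list" and k :: nat assume l: "length xs = a" and E: "recf_eval (RMu f) xs k"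
    from inv_mu[OF E] have E0: "recf_eval f (k # xs) 0" and Eb: "\<forall>m<k. \<exists>y. recf_eval f (m # xs) y \<and> y \<noteq> 0"
      by auto
    have comp: "\<exists>t0. \<forall>t\<ge>t0. ev bf ((j # xs) @ [t]) = Suc y" if "recf_eval f (j # xs) y" for j y
    proof -
      have lx: "length (j # xs) = Suc a" using l by simp
      have P3: "\<And>xs y. length xs = Suc a \<Longrightarrow> recf_eval f xs y \<Longrightarrow> \<exists>t0. \<forall>t\<ge>t0. ev (bnd f (Suc a)) (xs @ [t]) = Suc y"
        using IHf[of "Suc a"] unfolding Pb_def by blast
      show ?thesis using P3[OF lx that] unfolding bf_def .
    qed
    have exi: "\<exists>t0. \<forall>t\<ge>t0. (i < k \<longrightarrow> 2 \<le> ev bf ((i # xs) @ [t])) \<and> (i = k \<longrightarrow> ev bf ((i # xs) @ [t]) = 1)"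
      if "i < Suc k" for i
    proof (cases "i = k")
      case True
      then show ?thesis using comp[OF E0] by auto
    next
      case False
      then have "i < k" using that by simp
      then obtain y where "recf_eval f (i # xs) y" "y \<noteq> 0" using Eb by blast
      then obtain t0 where "\<forall>t\<ge>t0. ev bf ((i # xs) @ [t]) = Suc y" using comp by blast
      then show ?thesis using \<open>y \<noteq> 0\<close> False by (intro exI[of _ t0]) auto
    qed
    have "\<exists>t0. \<forall>t\<ge>t0. \<forall>i<Suc k. (i < k \<longrightarrow> 2 \<le> ev bf ((i # xs) @ [t])) \<and> (i = k \<longrightarrow> ev bf ((i # xs) @ [t]) = 1)"
      by (rule ex_common) (rule exi)
    then obtain t1 where t1: "\<forall>t\<ge>t1. \<forall>i<Suc k. (i < k \<longrightarrow> 2 \<le> ev bf ((i # xs) @ [t])) \<and> (i = k \<longrightarrow> ev bf ((i # xs) @ [t]) = 1)"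
      by blast
    show "\<exists>t0. \<forall>t\<ge>t0. F (xs @ [t]) = Suc k"
    proof (rule exI[of _ "max t1 k"], intro allI impI)
      fix t assume "max t1 k \<le> t"
      then have tt: "t1 \<le> t" "k \<le> t" by auto
      have "srch (\<lambda>j. ev bf ((j # xs) @ [t])) (Suc t) = k + 2"
        by (rule srch_hit) (use t1 tt in auto)
      then show "F (xs @ [t]) = Suc k" using F_eq[OF l] by simp
    qed
  qed
qed

theorem Pb_all: "Pb f a"
proof (induction f arbitrary: a)
  case RZero then show ?case by (rule Pb_zero)
next
  case RSucc then show ?case by (rule Pb_succ)
next
  case (RProj i) then show ?case by (rule Pb_proj)
next
  case (RComp f hs) then show ?case by (intro Pb_comp) auto
next
  case (RPrim f h) then show ?case by (intro Pb_prim) auto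
next
  case (RMu f) then show ?case by (intro Pb_mu) auto
qed


declare cb_pred[cbI] cb_sub[cbI] cb_mul[cbI] cb_sg[cbI] cb_nsg[cbI] cb_eq[cbI] cb_le[cbI] cb_lt[cbI]

fun sfun :: "nat \<Rightarrow> nat" where
  "sfun 0 = 0"
| "sfun (Suc m) = sfun m + (if triangle (sfun m) + sfun m \<le> m then 1 else 0)"

lemma sfun_inv: "triangle (sfun m) \<le> m \<and> m \<le> triangle (sfun m) + sfun m"
  by (induction m) auto

lemma pd_eq: "prod_decode m = (m - triangle (sfun m), sfun m - (m - triangle (sfun m)))"
proof -
  let ?s = "sfun m" let ?a = "m - triangle ?s"
  have i: "triangle ?s \<le> m" "m \<le> triangle ?s + ?s" using sfun_inv by auto
  have "prod_encode (?a, ?s - ?a) = m" using i by (simp add: prod_encode_def)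
  then show ?thesis by (metis prod_encode_inverse)
qed

definition "TRI = RPrim RZero (RComp ADD [RProj 0, RComp RSucc [RProj 1]])"
lemma cb_tri[cbI]: "cb TRI 1 (\<lambda>xs. triangle (xs ! 0))"
proof -
  have 1: "cb TRI (Suc 0) (\<lambda>xs. prec (\<lambda>_. 0) (\<lambda>xs. xs ! 0 + Suc (xs ! 1)) (hd xs) (tl xs))"
    unfolding TRI_def by (rule cb_prim cbI | simp)+
  have 2: "prec (\<lambda>_. 0) (\<lambda>xs. xs ! 0 + Suc (xs ! 1)) k [] = triangle k" for k by (induction k) auto
  show ?thesis by (rule cb_cong2[OF 1]) (auto simp: len1 2[simplified])
qed

definition "SF = RPrim RZero (RComp ADD [RProj 0, RComp LE [RComp ADD [RComp TRI [RProj 0], RProj 0], RProj 1]])"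
lemma cb_sf[cbI]: "cb SF 1 (\<lambda>xs. sfun (xs ! 0))"
proof -
  have 1: "cb SF (Suc 0) (\<lambda>xs. prec (\<lambda>_. 0) (\<lambda>xs. xs ! 0 + (if triangle (xs ! 0) + xs ! 0 \<le> xs ! 1 then 1 else 0)) (hd xs) (tl xs))"
    unfolding SF_def by (rule cb_prim cbI | simp)+
  have 2: "prec (\<lambda>_. 0) (\<lambda>xs. xs ! 0 + (if triangle (xs ! 0) + xs ! 0 \<le> xs ! 1 then 1 else 0)) k [] = sfun k" for k
    by (induction k) auto
  show ?thesis by (rule cb_cong2[OF 1]) (auto simp: len1 2[simplified])
qed

definition "PD1 = RComp SUB [RProj 0, RComp TRI [SF]]"
lemma cb_pd1[cbI]: "cb PD1 1 (\<lambda>xs. fst (prod_decode (xs ! 0)))"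
  unfolding PD1_def by (rule cbI | simp add: pd_eq)+

definition "PD2 = RComp SUB [SF, PD1]"
lemma cb_pd2[cbI]: "cb PD2 1 (\<lambda>xs. snd (prod_decode (xs ! 0)))"
  unfolding PD2_def by (rule cbI | simp add: pd_eq)+

definition lhd :: "nat \<Rightarrow> nat" where "lhd c = fst (prod_decode (c - 1))"
definition ltl :: "nat \<Rightarrow> nat" where "ltl c = snd (prod_decode (c - 1))"

definition "LHD = RComp PD1 [RComp PRED [RProj 0]]"
lemma cb_lhd[cbI]: "cb LHD 1 (\<lambda>xs. lhd (xs ! 0))"
  unfolding LHD_def lhd_def by (rule cbI | simp)+
definition "LTL = RComp PD2 [RComp PRED [RProj 0]]"
lemma cb_ltl[cbI]: "cb LTL 1 (\<lambda>xs. ltl (xs ! 0))"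
  unfolding LTL_def ltl_def by (rule cbI | simp)+

definition tln :: "nat \<Rightarrow> nat \<Rightarrow> nat" where "tln i c = (ltl ^^ i) c"

definition "TLN = RPrim (RProj 0) (RComp LTL [RProj 0])"
lemma cb_tln[cbI]: "cb TLN 2 (\<lambda>xs. tln (xs ! 0) (xs ! 1))"
proof -
  have 1: "cb TLN (Suc (Suc 0)) (\<lambda>xs. prec (\<lambda>xs. xs ! 0) (\<lambda>xs. ltl (xs ! 0)) (hd xs) (tl xs))"
    unfolding TLN_def by (rule cb_prim cbI | simp)+
  have 2: "prec (\<lambda>xs. xs ! 0) (\<lambda>xs. ltl (xs ! 0)) k [c] = tln k c" for k c
    by (induction k) (auto simp: tln_def)
  show ?thesis by (rule cb_cong2[OF 1]) (auto simp: len2 numeral_2_eq_2 2[simplified, unfolded numeral_2_eq_2])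
qed

definition cnt :: "nat \<Rightarrow> nat \<Rightarrow> nat" where "cnt i c = (\<Sum>j<i. if tln j c = 0 then 0 else 1)"

definition "CNT = RPrim RZero (RComp ADD [RProj 0, RComp SG [RComp TLN [RProj 1, RProj 2]]])"
lemma cb_cnt[cbI]: "cb CNT 2 (\<lambda>xs. cnt (xs ! 0) (xs ! 1))"
proof -
  have 1: "cb CNT (Suc (Suc 0)) (\<lambda>xs. prec (\<lambda>_. 0) (\<lambda>xs. xs ! 0 + (if tln (xs ! 1) (xs ! 2) = 0 then 0 else 1)) (hd xs) (tl xs))"
    unfolding CNT_def by (rule cb_prim cbI | simp)+
  have 2: "prec (\<lambda>_. 0) (\<lambda>xs. xs ! 0 + (if tln (xs ! 1) (xs ! 2) = 0 then 0 else 1)) k [c] = cnt k c" for k c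
    by (induction k) (auto simp: cnt_def)
  show ?thesis by (rule cb_cong2[OF 1]) (auto simp: len2 numeral_2_eq_2 2[simplified, unfolded numeral_2_eq_2])
qed

definition lenc :: "nat \<Rightarrow> nat" where "lenc c = cnt c c"
definition "LEN = RComp CNT [RProj 0, RProj 0]"
lemma cb_len[cbI]: "cb LEN 1 (\<lambda>xs. lenc (xs ! 0))"
  unfolding LEN_def lenc_def by (rule cbI | simp)+

definition nthc :: "nat \<Rightarrow> nat \<Rightarrow> nat" where "nthc i c = lhd (tln i c)"
definition "NTH = RComp LHD [TLN]"
lemma cb_nth[cbI]: "cb NTH 2 (\<lambda>xs. nthc (xs ! 0) (xs ! 1))"
  unfolding NTH_def nthc_def by (rule cbI | simp)+

definition "PE = RComp ADD [RComp TRI [ADD], RProj 0]"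
lemma cb_pe[cbI]: "cb PE 2 (\<lambda>xs. prod_encode (xs ! 0, xs ! 1))"
  unfolding PE_def by (rule cbI | simp add: prod_encode_def)+

fun apr :: "nat \<Rightarrow> nat \<Rightarrow> nat \<Rightarrow> nat" where
  "apr 0 c u = u"
| "apr (Suc j) c u = Suc (prod_encode (nthc (lenc c - Suc j) c, apr j c u))"

definition "APR = RPrim (RProj 1) (RComp RSucc [RComp PE [RComp NTH [RComp SUB [RComp LEN [RProj 2], RComp RSucc [RProj 1]], RProj 2], RProj 0]])"
lemma cb_apr[cbI]: "cb APR 3 (\<lambda>xs. apr (xs ! 0) (xs ! 1) (xs ! 2))"
proof -
  have 1: "cb APR (Suc (Suc (Suc 0))) (\<lambda>xs. prec (\<lambda>xs. xs ! 1)
      (\<lambda>xs. Suc (prod_encode (nthc (lenc (xs ! 2) - Suc (xs ! 1)) (xs ! 2), xs ! 0))) (hd xs) (tl xs))"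
    unfolding APR_def by (rule cb_prim cbI | simp)+
  have 2: "prec (\<lambda>xs. xs ! 1) (\<lambda>xs. Suc (prod_encode (nthc (lenc (xs ! 2) - Suc (xs ! 1)) (xs ! 2), xs ! 0))) k [c, u]
     = apr k c u" for k c u
    by (induction k) auto
  show ?thesis by (rule cb_cong2[OF 1]) (auto simp: len3 numeral_3_eq_3 2[simplified])
qed

definition appc :: "nat \<Rightarrow> nat \<Rightarrow> nat" where "appc c u = apr (lenc c) c u"
definition "APP = RComp APR [RComp LEN [RProj 0], RProj 0, RProj 1]"
lemma cb_app[cbI]: "cb APP 2 (\<lambda>xs. appc (xs ! 0) (xs ! 1))"
  unfolding APP_def appc_def by (rule cbI | simp)+

definition badi :: "nat \<Rightarrow> nat \<Rightarrow> nat \<Rightarrow> nat" where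
  "badi n i v = (if i < lenc v then 1 else 0) *
     ((if fst (prod_decode (nthc i v)) - 1 = 0 then 0 else 1) + (if n - snd (prod_decode (nthc i v)) = 0 then 1 else 0)
      + (if Suc i < lenc v then 1 else 0) *
        ((if snd (prod_decode (nthc i v)) = snd (prod_decode (nthc (Suc i) v)) then 1 else 0) *
         (if (if fst (prod_decode (nthc i v)) = fst (prod_decode (nthc (Suc i) v)) then 1 else 0::nat) = 0 then 1 else 0)))"

definition "BADI n = (let xx = NTH; yy = RComp NTH [RComp RSucc [RProj 0], RProj 1]; ll = RComp LEN [RProj 1] in
  RComp MUL [RComp LT [RProj 0, ll],
    RComp ADD [RComp ADD [RComp SG [RComp SUB [RComp PD1 [xx], ONE]], RComp NSG [RComp SUB [CONSTN n, RComp PD2 [xx]]]],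
      RComp MUL [RComp LT [RComp RSucc [RProj 0], ll],
        RComp MUL [RComp EQ [RComp PD2 [xx], RComp PD2 [yy]], RComp NSG [RComp EQ [RComp PD1 [xx], RComp PD1 [yy]]]]]]])"

lemma cb_badi[cbI]: "cb (BADI n) 2 (\<lambda>xs. badi n (xs ! 0) (xs ! 1))"
  unfolding BADI_def Let_def badi_def by (rule cbI | simp)+

definition bad :: "nat \<Rightarrow> nat \<Rightarrow> nat" where "bad n v = (\<Sum>i<v. badi n i v)"

definition "BADS n = RPrim RZero (RComp ADD [RProj 0, RComp (BADI n) [RProj 1, RProj 2]])"
definition "BAD n = RComp (BADS n) [RProj 0, RProj 0]"
lemma cb_bad[cbI]: "cb (BAD n) 1 (\<lambda>xs. bad n (xs ! 0))"
proof -
  have 1: "cb (BADS n) (Suc (Suc 0)) (\<lambda>xs. prec (\<lambda>_. 0) (\<lambda>xs. xs ! 0 + badi n (xs ! 1) (xs ! 2)) (hd xs) (tl xs))"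
    unfolding BADS_def by (rule cb_prim cbI | simp)+
  have 2: "prec (\<lambda>_. 0) (\<lambda>xs. xs ! 0 + badi n (xs ! 1) (xs ! 2)) k [c] = (\<Sum>i<k. badi n i c)" for k c
    by (induction k) auto
  have 3: "cb (BADS n) 2 (\<lambda>xs. (\<Sum>i<xs ! 0. badi n i (xs ! 1)))"
    by (rule cb_cong2[OF 1]) (auto simp: len2 numeral_2_eq_2 2[simplified, unfolded numeral_2_eq_2])
  show ?thesis unfolding BAD_def bad_def by (rule 3 cbI | simp)+
qed


lemma pd0: "prod_decode 0 = (0, 0)"
proof -
  have "prod_encode (0, 0) = 0" by (simp add: prod_encode_def)
  then show ?thesis by (metis prod_encode_inverse)
qed

lemma ltl_enc: "ltl (list_encode L) = list_encode (tl L)"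
  by (cases L) (auto simp: ltl_def pd0)

lemma lhd_enc: "L \<noteq> [] \<Longrightarrow> lhd (list_encode L) = hd L"
  by (cases L) (auto simp: lhd_def)

lemma tln_enc: "tln i (list_encode L) = list_encode (drop i L)"
  by (induction i) (auto simp: tln_def ltl_enc drop_Suc tl_drop)

lemma le_list_encode: "length L \<le> list_encode L"
proof (induction L)
  case Nil then show ?case by simp
next
  case (Cons x xs)
  have "list_encode xs \<le> prod_encode (x, list_encode xs)" by (rule le_prod_encode_2)
  then show ?case using Cons by simp
qed

lemma list_encode_0: "list_encode L = 0 \<longleftrightarrow> L = []"
  by (cases L) auto

lemma lenc_enc: "lenc (list_encode L) = length L"
proof -
  let ?c = "list_encode L"
  have "cnt ?c ?c = (\<Sum>j<?c. if j < length L then 1 else 0)"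
    unfolding cnt_def tln_enc list_encode_0 by (intro sum.cong) auto
  also have "\<dots> = card {j. j < ?c \<and> j < length L}"
    by (simp add: sum.If_cases Int_def)
  also have "{j. j < ?c \<and> j < length L} = {..<length L}" using le_list_encode[of L] by auto
  finally show ?thesis by (simp add: lenc_def)
qed

lemma nthc_enc: "i < length L \<Longrightarrow> nthc i (list_encode L) = L ! i"
  by (simp add: nthc_def tln_enc lhd_enc hd_drop_conv_nth)

lemma apr_enc: "j \<le> length A \<Longrightarrow> apr j (list_encode A) (list_encode B) = list_encode (drop (length A - j) A @ B)"
proof (induction j)
  case 0 then show ?case by simp
next
  case (Suc j)
  have i: "length A - Suc j < length A" using Suc.prems by simp
  have "drop (length A - Suc j) A = A ! (length A - Suc j) # drop (length A - j) A"
    using Cons_nth_drop_Suc[OF i] Suc.prems by (simp add: Suc_diff_Suc)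
  then show ?case using Suc by (simp add: lenc_enc nthc_enc[OF i])
qed

lemma appc_enc: "appc (list_encode A) (list_encode B) = list_encode (A @ B)"
  by (simp add: appc_def lenc_enc apr_enc)

definition goodlist :: "nat \<Rightarrow> nat list \<Rightarrow> bool" where
  "goodlist n L \<longleftrightarrow> (\<forall>i<length L. fst (prod_decode (L ! i)) \<le> 1 \<and> snd (prod_decode (L ! i)) < n)
     \<and> (\<forall>i. Suc i < length L \<longrightarrow> \<not> (snd (prod_decode (L ! i)) = snd (prod_decode (L ! Suc i))
            \<and> fst (prod_decode (L ! i)) \<noteq> fst (prod_decode (L ! Suc i))))"

lemma bad_enc: "bad n (list_encode L) = 0 \<longleftrightarrow> goodlist n L"
proof -
  let ?v = "list_encode L"
  have "bad n ?v = 0 \<longleftrightarrow> (\<forall>i<?v. badi n i ?v = 0)" by (auto simp: bad_def)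
  also have "\<dots> \<longleftrightarrow> (\<forall>i<length L. badi n i ?v = 0)"
  proof
    assume "\<forall>i<?v. badi n i ?v = 0" then show "\<forall>i<length L. badi n i ?v = 0"
      using le_list_encode[of L] by auto
  next
    assume "\<forall>i<length L. badi n i ?v = 0" then show "\<forall>i<?v. badi n i ?v = 0"
      by (auto simp: badi_def lenc_enc)
  qed
  also have "\<dots> \<longleftrightarrow> goodlist n L"
  proof -
    have e: "badi n i ?v = 0 \<longleftrightarrow> (fst (prod_decode (L ! i)) \<le> 1 \<and> snd (prod_decode (L ! i)) < n) \<and>
        (Suc i < length L \<longrightarrow> \<not> (snd (prod_decode (L ! i)) = snd (prod_decode (L ! Suc i))
            \<and> fst (prod_decode (L ! i)) \<noteq> fst (prod_decode (L ! Suc i))))" if "i < length L" for i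
      using that by (auto simp: badi_def lenc_enc nthc_enc)
    show ?thesis unfolding goodlist_def using e by (auto simp: Suc_lessD)
  qed
  finally show ?thesis .
qed

definition enc :: "bool \<times> nat \<Rightarrow> nat" where "enc x = prod_encode (if fst x then 1 else 0, snd x)"

lemma word_code_enc: "word_code w = list_encode (map enc w)"
  unfolding word_code_def enc_def by (rule arg_cong[where f=list_encode], rule map_cong) auto

lemma inj_enc: "inj enc"
  unfolding enc_def inj_def by (auto dest!: inj_prod_encode[THEN injD] split: if_splits)

lemma goodlist_iff: "goodlist n L \<longleftrightarrow> (\<exists>w\<in>free_words n. L = map enc w)"
proof
  assume g: "goodlist n L"
  define w where "w = map (\<lambda>c. (fst (prod_decode c) = 1, snd (prod_decode c))) L"
  have "map enc w = L"
  proof (rule nth_equalityI)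
    show "length (map enc w) = length L" by (simp add: w_def)
    fix i assume "i < length (map enc w)"
    then have i: "i < length L" by (simp add: w_def)
    then have "fst (prod_decode (L ! i)) \<le> 1" using g by (simp add: goodlist_def)
    then have "(if fst (prod_decode (L ! i)) = 1 then 1 else 0) = fst (prod_decode (L ! i))" by auto
    then show "map enc w ! i = L ! i" using i
      by (simp add: w_def enc_def)
  qed
  moreover have "w \<in> free_words n"
  proof -
    have "set (map snd w) \<subseteq> {..<n}" using g by (auto simp: w_def goodlist_def in_set_conv_nth)
    moreover have "freely_reduced w"
    proof -
      have "\<not> (snd (prod_decode (L ! i)) = snd (prod_decode (L ! Suc i)) \<and>
               (fst (prod_decode (L ! i)) = 1) \<noteq> (fst (prod_decode (L ! Suc i)) = 1))"
        if "Suc i < length L" for i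
      proof -
        have "fst (prod_decode (L ! i)) \<le> 1" "fst (prod_decode (L ! Suc i)) \<le> 1" using g that by (auto simp: goodlist_def)
        then show ?thesis using g that unfolding goodlist_def by auto
      qed
      then show ?thesis by (auto simp: freely_reduced_def w_def)
    qed
    ultimately show ?thesis by (simp add: free_words_def)
  qed
  ultimately show "\<exists>w\<in>free_words n. L = map enc w" by auto
next
  assume "\<exists>w\<in>free_words n. L = map enc w"
  then obtain w where w: "w \<in> free_words n" "L = map enc w" by auto
  have pd: "prod_decode (enc x) = (if fst x then 1 else 0, snd x)" for x by (simp add: enc_def)
  have sn: "snd (w ! i) < n" if "i < length w" for i
  proof -
    have "snd (w ! i) \<in> set (map snd w)" using that by (simp add: nth_mem)
    then show ?thesis using w(1) by (auto simp: free_words_def)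
  qed
  have fr: "\<not> (snd (w ! i) = snd (w ! Suc i) \<and> fst (w ! i) \<noteq> fst (w ! Suc i))" if "Suc i < length w" for i
    using w(1) that by (simp add: free_words_def freely_reduced_def)
  show "goodlist n L"
    unfolding goodlist_def w(2)
  proof (rule conjI; intro allI impI)
    fix i assume "i < length (map enc w)"
    then show "fst (prod_decode (map enc w ! i)) \<le> 1 \<and> snd (prod_decode (map enc w ! i)) < n"
      using sn by (simp add: pd)
  next
    fix i assume "Suc i < length (map enc w)"
    then show "\<not> (snd (prod_decode (map enc w ! i)) = snd (prod_decode (map enc w ! Suc i)) \<and>
       fst (prod_decode (map enc w ! i)) \<noteq> fst (prod_decode (map enc w ! Suc i)))"
      using fr[of i] by (simp add: pd)
  qed
qed


definition badpair :: "bool \<times> nat \<Rightarrow> bool \<times> nat \<Rightarrow> bool" where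
  "badpair x y \<longleftrightarrow> snd x = snd y \<and> fst x \<noteq> fst y"

lemma fr_Nil[simp]: "freely_reduced []" by (simp add: freely_reduced_def)

lemma fr_Cons: "freely_reduced (x # zs) \<longleftrightarrow> (zs \<noteq> [] \<longrightarrow> \<not> badpair x (hd zs)) \<and> freely_reduced zs"
proof
  assume a: "freely_reduced (x # zs)"
  have "zs \<noteq> [] \<longrightarrow> \<not> badpair x (hd zs)"
    using a[unfolded freely_reduced_def, rule_format, of 0] by (cases zs) (auto simp: badpair_def)
  moreover have "freely_reduced zs"
    unfolding freely_reduced_def
  proof (intro allI impI)
    fix i assume "Suc i < length zs"
    then show "\<not> (snd (zs ! i) = snd (zs ! Suc i) \<and> fst (zs ! i) \<noteq> fst (zs ! Suc i))"
      using a[unfolded freely_reduced_def, rule_format, of "Suc i"] by simp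
  qed
  ultimately show "(zs \<noteq> [] \<longrightarrow> \<not> badpair x (hd zs)) \<and> freely_reduced zs" by simp
next
  assume a: "(zs \<noteq> [] \<longrightarrow> \<not> badpair x (hd zs)) \<and> freely_reduced zs"
  show "freely_reduced (x # zs)"
    unfolding freely_reduced_def
  proof (intro allI impI)
    fix i assume i: "Suc i < length (x # zs)"
    show "\<not> (snd ((x # zs) ! i) = snd ((x # zs) ! Suc i) \<and> fst ((x # zs) ! i) \<noteq> fst ((x # zs) ! Suc i))"
    proof (cases i)
      case 0
      then show ?thesis using a i by (cases zs) (auto simp: badpair_def)
    next
      case (Suc j)
      then show ?thesis using a i by (simp add: freely_reduced_def)
    qed
  qed
qed

lemma fr_append: "freely_reduced (xs @ ys) \<longleftrightarrow> freely_reduced xs \<and> freely_reduced ys \<and>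
   (xs \<noteq> [] \<and> ys \<noteq> [] \<longrightarrow> \<not> badpair (last xs) (hd ys))"
proof (induction xs)
  case Nil then show ?case by simp
next
  case (Cons x xs)
  show ?case
  proof (cases "xs = []")
    case True then show ?thesis by (auto simp: fr_Cons)
  next
    case False then show ?thesis using Cons by (auto simp: fr_Cons)
  qed
qed

lemma fw_append: "xs @ ys \<in> free_words n \<longleftrightarrow> xs \<in> free_words n \<and> ys \<in> free_words n \<and>
   (xs \<noteq> [] \<and> ys \<noteq> [] \<longrightarrow> \<not> badpair (last xs) (hd ys))"
  by (auto simp: free_words_def fr_append)

lemma fw_take: "x \<in> free_words n \<Longrightarrow> take k x \<in> free_words n"
  using fw_append[of "take k x" "drop k x" n] by simp
lemma fw_drop: "x \<in> free_words n \<Longrightarrow> drop k x \<in> free_words n"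
  using fw_append[of "take k x" "drop k x" n] by simp

definition fl :: "nat \<Rightarrow> bool \<times> nat \<Rightarrow> bool \<times> nat" where
  "fl i0 l = (if snd l = i0 then \<not> fst l else fst l, snd l)"

lemma fl_fl[simp]: "fl i0 (fl i0 l) = l" by (cases l) (simp add: fl_def)
lemma snd_fl[simp]: "snd (fl i0 l) = snd l" by (simp add: fl_def)
lemma badpair_fl[simp]: "badpair (fl i0 x) (fl i0 y) = badpair x y" by (auto simp: fl_def badpair_def)

lemma fr_fl: "freely_reduced (map (fl i0) u) = freely_reduced u"
  by (induction u) (auto simp: fr_Cons hd_map)

lemma fw_fl: "map (fl i0) u \<in> free_words n \<longleftrightarrow> u \<in> free_words n"
proof -
  have "set (map snd (map (fl i0) u)) = set (map snd u)" by (induction u) auto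
  then show ?thesis by (simp only: free_words_def mem_Collect_eq fr_fl)
qed

lemma inj_flmap: "inj (map (fl i0))"
  by (rule injI) (metis fl_fl map_map comp_def map_idI)

lemma finite_letters: "finite {xs :: fword. set xs \<subseteq> UNIV \<times> {..<n} \<and> length xs \<le> k}"
  by (rule finite_lists_length_le) simp

lemma ball_sub: "ball_words n k \<subseteq> {xs :: fword. set xs \<subseteq> UNIV \<times> {..<n} \<and> length xs \<le> k}"
  by (auto simp: ball_words_def free_words_def)

lemma finite_ball: "finite (ball_words n k)"
  by (rule finite_subset[OF ball_sub finite_letters])

lemma nil_ball: "[] \<in> ball_words n k"
  by (simp add: ball_words_def free_words_def freely_reduced_def)

lemma card_ball_pos: "0 < card (ball_words n k)"
  using finite_ball nil_ball card_gt_0_iff by blast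

lemma ball_growth: "card (ball_words n (k + m)) \<le> card (ball_words n k) * card {xs :: fword. set xs \<subseteq> UNIV \<times> {..<n} \<and> length xs \<le> m}"
proof -
  let ?L = "{xs :: fword. set xs \<subseteq> UNIV \<times> {..<n} \<and> length xs \<le> m}"
  have inj: "inj_on (\<lambda>x. (take k x, drop k x)) (ball_words n (k + m))"
    by (rule inj_onI) (metis append_take_drop_id prod.inject)
  have sub: "(\<lambda>x. (take k x, drop k x)) ` ball_words n (k + m) \<subseteq> ball_words n k \<times> ?L"
  proof
    fix p assume "p \<in> (\<lambda>x. (take k x, drop k x)) ` ball_words n (k + m)"
    then obtain x where x: "x \<in> ball_words n (k + m)" "p = (take k x, drop k x)" by auto
    have "take k x \<in> ball_words n k" using x fw_take by (auto simp: ball_words_def)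
    moreover have "drop k x \<in> ?L" using x
      by (auto simp: ball_words_def free_words_def dest!: in_set_dropD)
    ultimately show "p \<in> ball_words n k \<times> ?L" using x by simp
  qed
  have "card (ball_words n (k + m)) \<le> card (ball_words n k \<times> ?L)"
    by (rule card_inj_on_le[OF inj sub]) (simp add: finite_ball finite_letters)
  then show ?thesis by (simp add: card_cartesian_product)
qed



lemma exists_good:
  assumes gen: "generic n S" and w: "w \<in> free_words n"
  shows "\<exists>u\<in>S. w @ u \<in> S"
proof (rule ccontr)
  assume none: "\<not> (\<exists>u\<in>S. w @ u \<in> S)"
  define F where "F = free_words n"
  define C where "C = F - S"
  have SF: "S \<subseteq> F" and neg: "negligible n C" using gen by (auto simp: generic_def F_def C_def)
  define B where "B = (\<lambda>k. ball_words n k)"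
  define m where "m = length w"
  define A where "A = {u \<in> F. w @ u \<in> F}"
  define K where "K = card {xs :: fword. set xs \<subseteq> UNIV \<times> {..<n} \<and> length xs \<le> m}"
  have finB: "finite (B k)" for k by (simp add: B_def finite_ball)
  have BF: "B k \<subseteq> F" for k by (auto simp: B_def F_def ball_words_def)
  have c1: "card (B k) \<le> 2 * card (A \<inter> B k)" for k
  proof -
    have d: "card (B k - A) \<le> card (A \<inter> B k)"
    proof (cases "w = []")
      case True
      then have e: "B k - A = {}" using BF by (auto simp: A_def)
      show ?thesis by (simp add: e)
    next
      case False
      define i0 where "i0 = snd (last w)"
      have "inj_on (map (fl i0)) (B k - A)" by (rule inj_on_subset[OF inj_flmap]) simp
      moreover have "map (fl i0) ` (B k - A) \<subseteq> A \<inter> B k"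
      proof
        fix v assume "v \<in> map (fl i0) ` (B k - A)"
        then obtain u where u: "u \<in> B k" "u \<notin> A" "v = map (fl i0) u" by auto
        have uF: "u \<in> F" using u BF by auto
        then have "\<not> (w @ u \<in> F)" using u by (simp add: A_def)
        then have ne: "u \<noteq> []" and bp: "badpair (last w) (hd u)"
          using fw_append[of w u n] w uF False by (auto simp: F_def)
        have vF: "v \<in> F" using uF u(3) fw_fl by (simp add: F_def)
        have hv: "hd v = fl i0 (hd u)" using ne u(3) by (simp add: hd_map)
        have "\<not> badpair (last w) (hd v)"
          using bp hv by (auto simp: badpair_def fl_def i0_def)
        moreover have "v \<noteq> []" using ne u(3) by simp
        ultimately have "w @ v \<in> F" using fw_append[of w v n] w vF by (auto simp: F_def)
        then have "v \<in> A" using vF by (simp add: A_def)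
        moreover have "v \<in> B k" using u vF by (auto simp: B_def ball_words_def F_def)
        ultimately show "v \<in> A \<inter> B k" by simp
      qed
      ultimately show ?thesis using card_inj_on_le finB by (metis finite_Int)
    qed
    have "card (B k) = card (A \<inter> B k) + card (B k - A)"
      using card_Int_Diff[OF finB[of k], of A] by (simp add: Int_commute)
    then show ?thesis using d by simp
  qed
  have c2: "card (S \<inter> A \<inter> B k) \<le> card (C \<inter> B (k + m))" for k
  proof -
    have "inj_on (\<lambda>u. w @ u) (S \<inter> A \<inter> B k)" by (rule inj_onI) simp
    moreover have "(\<lambda>u. w @ u) ` (S \<inter> A \<inter> B k) \<subseteq> C \<inter> B (k + m)"
      using none by (auto simp: A_def C_def B_def ball_words_def m_def F_def)
    moreover have "finite (C \<inter> B (k + m))" using finB by simp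
    ultimately show ?thesis by (rule card_inj_on_le)
  qed
  have c3: "card (A \<inter> B k) \<le> card (S \<inter> A \<inter> B k) + card (C \<inter> B k)" for k
  proof -
    have "A \<inter> B k \<subseteq> (S \<inter> A \<inter> B k) \<union> (C \<inter> B k)" using BF by (auto simp: C_def)
    then have "card (A \<inter> B k) \<le> card ((S \<inter> A \<inter> B k) \<union> (C \<inter> B k))"
      by (rule card_mono[rotated]) (simp add: finB)
    also have "\<dots> \<le> card (S \<inter> A \<inter> B k) + card (C \<inter> B k)" by (rule card_Un_le)
    finally show ?thesis .
  qed
  have c4: "card (B (k + m)) \<le> card (B k) * K" for k
    unfolding B_def K_def by (rule ball_growth)
  define e where "e = (\<lambda>k. real (card (C \<inter> B k)) / real (card (B k)))"
  have pos: "0 < real (card (B k))" for k by (simp add: B_def card_ball_pos)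
  have key: "1 \<le> 2 * real K * e (k + m) + 2 * e k" for k
  proof -
    have i1: "card (B k) \<le> 2 * card (C \<inter> B (k + m)) + 2 * card (C \<inter> B k)"
      using c1[of k] c2[of k] c3[of k] by linarith
    have eq1: "real (card (C \<inter> B (k + m))) = e (k + m) * real (card (B (k + m)))"
      using pos[of "k + m"] by (simp add: e_def)
    have e0: "0 \<le> e (k + m)" by (simp add: e_def)
    have "real (card (B (k + m))) \<le> real (card (B k)) * real K" using c4[of k] by (metis of_nat_le_iff of_nat_mult)
    then have "e (k + m) * real (card (B (k + m))) \<le> e (k + m) * (real (card (B k)) * real K)"
      using e0 by (simp add: mult_left_mono)
    then have i2: "real (card (C \<inter> B (k + m))) \<le> e (k + m) * real K * real (card (B k))"
      using eq1 by (simp add: mult_ac)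
    have eq2: "real (card (C \<inter> B k)) = e k * real (card (B k))" using pos[of k] by (simp add: e_def)
    have "real (card (B k)) \<le> 2 * real (card (C \<inter> B (k + m))) + 2 * real (card (C \<inter> B k))"
      using i1 by linarith
    also have "\<dots> \<le> (2 * real K * e (k + m) + 2 * e k) * real (card (B k))"
      using i2 eq2 by (simp add: algebra_simps)
    finally have "1 * real (card (B k)) \<le> (2 * real K * e (k + m) + 2 * e k) * real (card (B k))" by simp
    then show ?thesis using pos[of k] by (rule mult_right_le_imp_le)
  qed
  have elim: "e \<longlonglongrightarrow> 0" using neg by (simp add: negligible_def e_def B_def)
  have elim2: "(\<lambda>k. e (k + m)) \<longlonglongrightarrow> 0" using LIMSEQ_ignore_initial_segment[OF elim] .
  have "(\<lambda>k. 2 * real K * e (k + m) + 2 * e k) \<longlonglongrightarrow> 2 * real K * 0 + 2 * 0"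
    by (intro tendsto_intros elim elim2)
  then have "(\<lambda>k. 2 * real K * e (k + m) + 2 * e k) \<longlonglongrightarrow> 0" by simp
  then have "eventually (\<lambda>k. 2 * real K * e (k + m) + 2 * e k < 1) sequentially"
    by (rule order_tendstoD(2)) simp
  then obtain N where "\<forall>k\<ge>N. 2 * real K * e (k + m) + 2 * e k < 1" by (auto simp: eventually_sequentially)
  then show False using key[of N] by auto
qed


lemma word_eval_props:
  assumes grp: "group G" and gc: "g ` {..<n} \<subseteq> carrier G" and ws: "set (map snd w) \<subseteq> {..<n}"
  shows "word_eval G g w \<in> carrier G \<and>
    (\<forall>acc\<in>carrier G. foldr (\<lambda>(b, i) acc. (if b then g i else inv\<^bsub>G\<^esub> (g i)) \<otimes>\<^bsub>G\<^esub> acc) w acc = word_eval G g w \<otimes>\<^bsub>G\<^esub> acc)"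
  using ws
proof (induction w)
  case Nil
  interpret group G by (rule grp)
  show ?case by (simp add: word_eval_def)
next
  case (Cons l w)
  interpret group G by (rule grp)
  obtain b i where l: "l = (b, i)" by (cases l)
  have i: "i < n" using Cons.prems l by auto
  have gi: "g i \<in> carrier G" using gc i by auto
  have lc: "(if b then g i else inv\<^bsub>G\<^esub> (g i)) \<in> carrier G" using gi by auto
  have IH: "word_eval G g w \<in> carrier G"
    "\<forall>acc\<in>carrier G. foldr (\<lambda>(b, i) acc. (if b then g i else inv\<^bsub>G\<^esub> (g i)) \<otimes>\<^bsub>G\<^esub> acc) w acc = word_eval G g w \<otimes>\<^bsub>G\<^esub> acc"
    using Cons by auto
  have we: "word_eval G g (l # w) = (if b then g i else inv\<^bsub>G\<^esub> (g i)) \<otimes>\<^bsub>G\<^esub> word_eval G g w"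
    unfolding word_eval_def l by simp
  show ?case
  proof
    show "word_eval G g (l # w) \<in> carrier G" using we lc IH(1) by simp
    show "\<forall>acc\<in>carrier G. foldr (\<lambda>(b, i) acc. (if b then g i else inv\<^bsub>G\<^esub> (g i)) \<otimes>\<^bsub>G\<^esub> acc) (l # w) acc = word_eval G g (l # w) \<otimes>\<^bsub>G\<^esub> acc"
      using IH lc we by (simp add: l m_assoc)
  qed
qed

lemma word_eval_append:
  assumes grp: "group G" and gc: "g ` {..<n} \<subseteq> carrier G"
    and w: "set (map snd w) \<subseteq> {..<n}" and u: "set (map snd u) \<subseteq> {..<n}"
  shows "word_eval G g (w @ u) = word_eval G g w \<otimes>\<^bsub>G\<^esub> word_eval G g u"
proof -
  have "word_eval G g (w @ u) = foldr (\<lambda>(b, i) acc. (if b then g i else inv\<^bsub>G\<^esub> (g i)) \<otimes>\<^bsub>G\<^esub> acc) w (word_eval G g u)"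
    by (simp add: word_eval_def)
  then show ?thesis using word_eval_props[OF grp gc w] word_eval_props[OF grp gc u] by simp
qed


theorem theoremA:
  fixes G :: "('g, 'b) monoid_scheme" and n :: nat and g :: "nat \<Rightarrow> 'g"
    and S :: "fword set"
  assumes "group G"
    and "fin_gen_set G n g"
    and "generic n S"
    and "EP_solvable_on G n g (S \<times> S)"
  shows "WP_solvable_on G n g (free_words n)"
proof -
  note grp = assms(1)
  have gc: "g ` {..<n} \<subseteq> carrier G" using assms(2) by (simp add: fin_gen_set_def)
  have SF: "S \<subseteq> free_words n" using assms(3) by (simp add: generic_def)
  from assms(4) obtain f0 where H: "\<forall>(w1, w2)\<in>S \<times> S. \<exists>y. recf_eval f0 [word_code w1, word_code w2] y"
    and Cor: "\<forall>w1\<in>free_words n. \<forall>w2\<in>free_words n. \<forall>y. recf_eval f0 [word_code w1, word_code w2] y \<longrightarrow>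
              (y = 0 \<longleftrightarrow> word_eval G g w1 = word_eval G g w2)"
    unfolding EP_solvable_on_def by blast
  define bf where "bf = bnd f0 2"
  have Pf: "Pb f0 2" by (rule Pb_all)
  have cbf: "cb bf 3 (ev bf)" using Pf unfolding Pb_def bf_def by (simp add: numeral_3_eq_3 numeral_2_eq_2)
  have sound: "\<And>xs t. length xs = 2 \<Longrightarrow> ev bf (xs @ [t]) \<noteq> 0 \<Longrightarrow> recf_eval f0 xs (ev bf (xs @ [t]) - 1)"
    using Pf unfolding Pb_def bf_def by blast
  have compl: "\<And>xs y. length xs = 2 \<Longrightarrow> recf_eval f0 xs y \<Longrightarrow> \<exists>t0. \<forall>t\<ge>t0. ev bf (xs @ [t]) = Suc y"
    using Pf unfolding Pb_def bf_def by blast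
  define vs where "vs = (\<lambda>p c. appc c (fst (prod_decode p)))"
  define vals where "vals = (\<lambda>p c. ev bf [vs p c, fst (prod_decode p), snd (prod_decode p)])"
  define T where "T = (\<lambda>p c. bad n (vs p c) + (if vals p c = 0 then 1 else 0))"
  define V where "V = RComp APP [RProj 1, RComp PD1 [RProj 0]]"
  define VAL where "VAL = RComp bf [V, RComp PD1 [RProj 0], RComp PD2 [RProj 0]]"
  define TEST where "TEST = RComp ADD [RComp (BAD n) [V], RComp NSG [VAL]]"
  define OUT where "OUT = RComp PRED [VAL]"
  define ALG where "ALG = RComp OUT [RMu TEST, RProj 0]"
  have cV: "cb V 2 (\<lambda>xs. vs (xs ! 0) (xs ! 1))" unfolding V_def vs_def by (rule cbI | simp)+
  have cVAL: "cb VAL 2 (\<lambda>xs. vals (xs ! 0) (xs ! 1))" unfolding VAL_def vals_def by (rule cbf cV cbI | simp)+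
  have cTEST: "cb TEST 2 (\<lambda>xs. T (xs ! 0) (xs ! 1))" unfolding TEST_def T_def by (rule cVAL cV cbI | simp)+
  have cOUT: "cb OUT 2 (\<lambda>xs. vals (xs ! 0) (xs ! 1) - 1)" unfolding OUT_def by (rule cVAL cbI | simp)+
  have wc: "word_code w = list_encode (map enc w)" for w by (rule word_code_enc)
  have fwset: "set (map snd w) \<subseteq> {..<n}" if "w \<in> free_words n" for w using that by (simp add: free_words_def)
  show ?thesis
    unfolding WP_solvable_on_def
  proof (rule exI[of _ ALG], intro conjI ballI allI impI)
    fix w assume w: "w \<in> free_words n"
    let ?c = "word_code w"
    obtain u where u: "u \<in> S" "w @ u \<in> S" using exists_good[OF assms(3) w] by blast
    obtain y0 where y0: "recf_eval f0 [word_code (w @ u), word_code u] y0" using H u by auto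
    obtain t0 where t0: "\<forall>t\<ge>t0. ev bf ([word_code (w @ u), word_code u] @ [t]) = Suc y0"
      using compl[OF _ y0] by auto
    define p0 where "p0 = prod_encode (word_code u, t0)"
    have vs0: "vs p0 ?c = word_code (w @ u)" by (simp add: vs_def p0_def wc appc_enc)
    have bad0: "bad n (word_code (w @ u)) = 0"
      unfolding wc bad_enc goodlist_iff using u SF by (intro bexI[of _ "w @ u"]) auto
    have val0: "vals p0 ?c = Suc y0" using t0 vs0 by (simp add: vals_def p0_def)
    have T0: "T p0 ?c = 0" using vs0 bad0 val0 by (simp add: T_def)
    define ps where "ps = (LEAST p. T p ?c = 0)"
    have Tps: "T ps ?c = 0" unfolding ps_def by (rule LeastI[of _ p0]) (rule T0)
    have Tlt: "T m ?c \<noteq> 0" if "m < ps" for m using not_less_Least[of m "\<lambda>p. T p ?c = 0"] that unfolding ps_def by blast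
    have "recf_eval (RMu TEST) [?c] ps"
    proof (rule recf_eval.mu)
      show "recf_eval TEST [ps, ?c] 0" using cbD[OF cTEST, of "[ps, ?c]"] Tps by simp
      show "\<forall>m<ps. \<exists>y. recf_eval TEST [m, ?c] y \<and> y \<noteq> 0"
        using cbD[OF cTEST] Tlt by (metis One_nat_def length_Cons list.size(3) nth_Cons_0 nth_Cons_Suc numeral_2_eq_2)
    qed
    moreover have "recf_eval (RProj 0) [?c] ?c" using recf_eval.proj[of 0 "[?c]"] by simp
    moreover have "recf_eval OUT [ps, ?c] (vals ps ?c - 1)" using cbD[OF cOUT, of "[ps, ?c]"] by simp
    ultimately have "recf_eval ALG [?c] (vals ps ?c - 1)"
      unfolding ALG_def by (intro recf_eval.comp[where ys = "[ps, ?c]"]) auto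
    then show "\<exists>y. recf_eval ALG [word_code w] y" by blast
  next
    fix w y assume w: "w \<in> free_words n" and E: "recf_eval ALG [word_code w] y"
    let ?c = "word_code w"
    from E obtain ys where la: "list_all2 (\<lambda>h. recf_eval h [?c]) [RMu TEST, RProj 0] ys" and Eo: "recf_eval OUT ys y"
      unfolding ALG_def by (cases rule: recf_eval.cases) auto
    from la obtain p c' where ys: "ys = [p, c']" and Em: "recf_eval (RMu TEST) [?c] p" and Ep: "recf_eval (RProj 0) [?c] c'"
      by (auto simp: list_all2_Cons1)
    have c': "c' = ?c" using Ep by (cases rule: recf_eval.cases) auto
    have yv: "y = vals p ?c - 1" using cb_val[OF cOUT, of "[p, ?c]" y] Eo ys c' by simp
    have "recf_eval TEST [p, ?c] 0" using inv_mu[OF Em] by simp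
    then have "T p ?c = 0" using cb_val[OF cTEST, of "[p, ?c]" 0] by simp
    then have bad0: "bad n (vs p ?c) = 0" and vnz: "vals p ?c \<noteq> 0" by (auto simp: T_def split: if_splits)
    define u where "u = fst (prod_decode p)"
    define t where "t = snd (prod_decode p)"
    define L where "L = list_decode u"
    have uL: "u = list_encode L" by (simp add: L_def)
    have vsL: "vs p ?c = list_encode (map enc w @ L)" by (simp add: vs_def wc u_def[symmetric] uL appc_enc)
    obtain x where x: "x \<in> free_words n" "map enc w @ L = map enc x"
      using bad0 unfolding vsL bad_enc goodlist_iff by blast
    define u' where "u' = drop (length w) x"
    have "map enc (take (length w) x) = map enc w" using arg_cong[OF x(2), of "take (length w)"] by (simp add: take_map)
    then have tk: "take (length w) x = w" using inj_enc by simp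
    have Lu': "L = map enc u'" using arg_cong[OF x(2), of "drop (length w)"] by (simp add: drop_map u'_def)
    have xwu: "x = w @ u'" using tk by (metis append_take_drop_id u'_def)
    have u'F: "u' \<in> free_words n" unfolding u'_def by (rule fw_drop[OF x(1)])
    have cu: "word_code u' = u" by (simp add: wc uL Lu')
    have cv: "word_code (w @ u') = vs p ?c" unfolding vsL Lu' by (simp add: wc)
    have "recf_eval f0 [vs p ?c, u] (ev bf ([vs p ?c, u] @ [t]) - 1)"
      using sound[of "[vs p ?c, u]" t] vnz by (simp add: vals_def u_def t_def)
    then have "recf_eval f0 [word_code (w @ u'), word_code u'] (vals p ?c - 1)"
      by (simp add: cu cv vals_def u_def t_def)
    then have "(vals p ?c - 1 = 0) \<longleftrightarrow> word_eval G g (w @ u') = word_eval G g u'"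
      using Cor x(1) u'F xwu by blast
    also have "\<dots> \<longleftrightarrow> word_eval G g w = \<one>\<^bsub>G\<^esub>"
    proof -
      interpret group G by (rule grp)
      have a: "word_eval G g w \<in> carrier G" using word_eval_props[OF grp gc fwset[OF w]] by blast
      have b: "word_eval G g u' \<in> carrier G" using word_eval_props[OF grp gc fwset[OF u'F]] by blast
      show ?thesis using word_eval_append[OF grp gc fwset[OF w] fwset[OF u'F]] a b by simp
    qed
    finally show "y = 0 \<longleftrightarrow> word_eval G g w = \<one>\<^bsub>G\<^esub>" using yv by simp
  qed
qed


end
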